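(* With $\tau=(\sigma_{n-1}\cdots\sigma_1)^n\in B_n$, for every $m\ge0$, \[\Phi(\tau^m)=\sum_{i=0}^{n-1}\sum_{j=0}^{n-1}q^{mn(n-1-2i)}\,C(n)_{i+1,j+1}\,\Phi(\tau^j),\] where $\Phi(\tau^0)=\mathrm{id}_{V^{\otimes n}}$.
   Context: $V$ is the $\mathbb{C}(q)$-super vector space with basis $v_0$ (even), $v_1$ (odd). Fix $n\ge 2$. $\check R:V\otimes V\to V\otimes V$ is given by $\check R(v_0\otimes v_0)=qv_0\otimes v_0$, $\check R(v_1\otimes v_0)=v_0\otimes v_1$, $\check R(v_0\otimes v_1)=v_1\otimes v_0+(q-q^{-1})v_0\otimes v_1$, $\check R(v_1\otimes v_1)=-q^{-1}v_1\otimes v_1$. $\Phi(\sigma_t)=\mathrm{id}^{\otimes(t-1)}\otimes\check R\otimes\mathrm{id}^{\otimes(n-t-1)}$ defines an action $\Phi$ of the braid group $B_n$ on $V^{\otimes n}$. For $n\geq 2$, $B(n)$ is the $n\times n$ matrix with entries $B(n)_{ij}=q^{(i-1)n(n-1-2(j-1))}$ ($1\le i,j\le n$), a Vandermonde matrix hence invertible over $\mathbb{C}(q)$; $C(n)=B(n)^{-1}$. *)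

theory Defs
  imports "HOL-Computational_Algebra.Polynomial" "HOL-Computational_Algebra.Fraction_Field"
begin

text \<open>The ground field C(q): fractions of complex polynomials; q is the indeterminate.\<close>
type_synonym K = "complex poly fract"

definition qq :: K where "qq = Fract [:0, 1:] 1"

text \<open>Basis of V^{\<otimes>n}: words w of length n over {v0, v1}; False = v0, True = v1.
  Linear endomorphisms of V^{\<otimes>n} are represented by their matrices
  M w' w = coefficient of basis vector w' in the image of basis vector w.\<close>
definition words :: "nat \<Rightarrow> bool list set" where
  "words n = {w. length w = n}"

type_synonym endo = "bool list \<Rightarrow> bool list \<Rightarrow> K"

definition mmul :: "nat \<Rightarrow> endo \<Rightarrow> endo \<Rightarrow> endo" where
  "mmul n A B = (\<lambda>w' w. \<Sum>u\<in>words n. A w' u * B u w)"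

definition mid :: endo where
  "mid = (\<lambda>w' w. if w' = w then 1 else 0)"

fun mpow :: "nat \<Rightarrow> endo \<Rightarrow> nat \<Rightarrow> endo" where
  "mpow n A 0 = mid"
| "mpow n A (Suc k) = mmul n A (mpow n A k)"

text \<open>Rc a b c d = coefficient of v_c \<otimes> v_d in R(v_a \<otimes> v_b).\<close>
definition Rc :: "bool \<Rightarrow> bool \<Rightarrow> bool \<Rightarrow> bool \<Rightarrow> K" where
  "Rc a b c d =
     (if \<not> a \<and> \<not> b then (if \<not> c \<and> \<not> d then qq else 0)
      else if a \<and> \<not> b then (if \<not> c \<and> d then 1 else 0)
      else if \<not> a \<and> b then (if c \<and> \<not> d then 1 else if \<not> c \<and> d then qq - inverse qq else 0)
      else (if c \<and> d then - inverse qq else 0))"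

text \<open>Phi(sigma_t) = id^{\<otimes>(t-1)} \<otimes> R \<otimes> id^{\<otimes>(n-t-1)}, 1 \<le> t \<le> n-1; R acts on the
  tensor positions t, t+1 (list indices t-1, t). R is even, so no super signs arise.\<close>
definition Phi_sigma :: "nat \<Rightarrow> endo" where
  "Phi_sigma t = (\<lambda>w' w.
     if (\<forall>i<length w. i \<noteq> t - 1 \<and> i \<noteq> t \<longrightarrow> w' ! i = w ! i)
     then Rc (w ! (t - 1)) (w ! t) (w' ! (t - 1)) (w' ! t) else 0)"

fun Phi_desc :: "nat \<Rightarrow> nat \<Rightarrow> endo" where
  "Phi_desc n 0 = mid"
| "Phi_desc n (Suc k) = mmul n (Phi_sigma (Suc k)) (Phi_desc n k)"

definition Phi_tau :: "nat \<Rightarrow> endo" where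
  "Phi_tau n = mpow n (Phi_desc n (n - 1)) n"

definition Phi_tau_pow :: "nat \<Rightarrow> nat \<Rightarrow> endo" where
  "Phi_tau_pow n m = mpow n (Phi_tau n) m"

text \<open>B(n), 0-indexed: B i j = q^(i n (n-1-2j)), 0 \<le> i,j < n; C(n) = B(n)^{-1}.\<close>
definition Bmat :: "nat \<Rightarrow> nat \<Rightarrow> nat \<Rightarrow> K" where
  "Bmat n i j = qq powi (int i * int n * (int n - 1 - 2 * int j))"

definition Cmat :: "nat \<Rightarrow> nat \<Rightarrow> nat \<Rightarrow> K" where
  "Cmat n = (THE C.
      (\<forall>i j. (i \<ge> n \<or> j \<ge> n) \<longrightarrow> C i j = 0) \<and>
      (\<forall>i<n. \<forall>j<n. (\<Sum>k<n. C i k * Bmat n k j) = (if i = j then 1 else 0)) \<and>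
      (\<forall>i<n. \<forall>j<n. (\<Sum>k<n. Bmat n i k * C k j) = (if i = j then 1 else 0)))"

end

theory Submission
  imports Defs
begin

lemma qq_ne0: "qq \<noteq> 0" by (simp add: qq_def eq_fract Zero_fract_def)

definition supv :: "nat \<Rightarrow> (bool list \<Rightarrow> K) \<Rightarrow> bool" where
  "supv n v \<longleftrightarrow> (\<forall>w. w \<notin> words n \<longrightarrow> v w = 0)"

definition appv :: "nat \<Rightarrow> endo \<Rightarrow> (bool list \<Rightarrow> K) \<Rightarrow> (bool list \<Rightarrow> K)" where
  "appv n A v = (\<lambda>w'. if w' \<in> words n then \<Sum>u\<in>words n. A w' u * v u else 0)"

lemma finite_words[simp]: "finite (words n)"
proof -
  have "finite {xs. set xs \<subseteq> (UNIV::bool set) \<and> length xs = n}"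
    by (rule finite_lists_length_eq) simp
  then show ?thesis by (simp add: words_def)
qed

lemma appv_mmul: "appv n (mmul n A B) v = appv n A (appv n B v)"
proof (rule ext)
  fix w'
  show "appv n (mmul n A B) v w' = appv n A (appv n B v) w'"
  proof (cases "w' \<in> words n")
    case True
    have "(\<Sum>u\<in>words n. (\<Sum>x\<in>words n. A w' x * B x u) * v u)
        = (\<Sum>x\<in>words n. A w' x * (\<Sum>u\<in>words n. B x u * v u))"
      apply (simp add: sum_distrib_left sum_distrib_right mult.assoc)
      apply (rule sum.swap)
      done
    thus ?thesis using True by (simp add: appv_def mmul_def cong: sum.cong)
  qed (simp add: appv_def)
qed

lemma appv_mid: "supv n v \<Longrightarrow> appv n mid v = v"
proof (rule ext)
  fix w assume s: "supv n v"
  show "appv n mid v w = v w"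
  proof (cases "w \<in> words n")
    case True
    have "(\<Sum>u\<in>words n. mid w u * v u) = (\<Sum>u\<in>words n. if w = u then v u else 0)"
      by (rule sum.cong) (auto simp: mid_def)
    also have "\<dots> = v w" using True by (simp add: sum.delta)
    finally show ?thesis using True by (simp add: appv_def)
  qed (use s in \<open>simp add: appv_def supv_def\<close>)
qed

lemma supv_appv[simp]: "supv n (appv n A v)"
  by (simp add: supv_def appv_def)

lemma appv_add: "appv n A (\<lambda>u. f u + g u) w = appv n A f w + appv n A g w"
  by (simp add: appv_def distrib_left sum.distrib)

lemma appv_scale: "appv n A (\<lambda>u. a * f u) w = a * appv n A f w"
  by (simp add: appv_def sum_distrib_left mult.left_commute)

lemma appv_zero: "appv n A (\<lambda>u. 0) = (\<lambda>u. 0)"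
  by (rule ext) (simp add: appv_def)

lemma appv_mpow_eig:
  assumes "supv n v" "appv n A v = (\<lambda>u. \<mu> * v u)"
  shows "appv n (mpow n A m) v = (\<lambda>u. \<mu> ^ m * v u)"
proof (induction m)
  case 0 then show ?case using appv_mid[OF assms(1)] by simp
next
  case (Suc m)
  have "appv n (mpow n A (Suc m)) v = appv n A (\<lambda>u. \<mu> ^ m * v u)"
    by (simp add: appv_mmul Suc)
  also have "\<dots> = (\<lambda>u. \<mu> ^ Suc m * v u)"
    by (rule ext) (simp add: appv_scale assms(2))
  finally show ?case .
qed

lemma sigma_apply:
  assumes "1 \<le> t" "t < n" "w' \<in> words n"
  shows "appv n (Phi_sigma t) v w' =
    (\<Sum>a\<in>UNIV. \<Sum>b\<in>UNIV. Rc a b (w'!(t-1)) (w'!t) * v (w'[t-1:=a, t:=b]))"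
proof -
  define f where "f = (\<lambda>(a,b). w'[t-1:=a, t:=b])"
  have len: "length w' = n" using assms(3) by (simp add: words_def)
  have ne: "t - 1 \<noteq> t" using assms by simp
  have inj: "inj f"
  proof (rule injI)
    fix x y assume "f x = f y"
    then have "f x ! (t-1) = f y ! (t-1)" "f x ! t = f y ! t" by auto
    then show "x = y" using len assms ne by (cases x; cases y) (auto simp: f_def nth_list_update)
  qed
  have Ssub: "range f \<subseteq> words n" using len by (auto simp: f_def words_def)
  have zero: "Phi_sigma t w' u * v u = 0" if "u \<in> words n - range f" for u
  proof -
    have lu: "length u = n" using that by (simp add: words_def)
    have "\<not> (\<forall>i<length u. i \<noteq> t - 1 \<and> i \<noteq> t \<longrightarrow> w' ! i = u ! i)"
    proof
      assume ag: "\<forall>i<length u. i \<noteq> t - 1 \<and> i \<noteq> t \<longrightarrow> w' ! i = u ! i"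
      have "u = f (u!(t-1), u!t)"
        by (rule nth_equalityI) (use ag lu len assms in \<open>auto simp: f_def nth_list_update\<close>)
      with that show False by auto
    qed
    then show ?thesis by (auto simp: Phi_sigma_def)
  qed
  have "appv n (Phi_sigma t) v w' = (\<Sum>u\<in>words n. Phi_sigma t w' u * v u)"
    using assms by (simp add: appv_def)
  also have "\<dots> = (\<Sum>u\<in>range f. Phi_sigma t w' u * v u)"
    by (rule sum.mono_neutral_right) (use Ssub zero in auto)
  also have "\<dots> = (\<Sum>x\<in>UNIV. Phi_sigma t w' (f x) * v (f x))"
    by (simp add: sum.reindex[OF inj])
  also have "\<dots> = (\<Sum>x\<in>UNIV. Rc (fst x) (snd x) (w'!(t-1)) (w'!t) * v (f x))"
  proof (rule sum.cong[OF refl])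
    fix x :: "bool \<times> bool"
    obtain a b where x: "x = (a,b)" by (cases x)
    have "Phi_sigma t w' (f x) = Rc a b (w'!(t-1)) (w'!t)"
      using len assms ne by (simp add: Phi_sigma_def f_def x nth_list_update)
    then show "Phi_sigma t w' (f x) * v (f x) = Rc (fst x) (snd x) (w'!(t-1)) (w'!t) * v (f x)"
      by (simp add: x)
  qed
  also have "\<dots> = (\<Sum>a\<in>UNIV. \<Sum>b\<in>UNIV. Rc a b (w'!(t-1)) (w'!t) * v (w'[t-1:=a, t:=b]))"
    by (simp add: UNIV_Times_UNIV[symmetric] sum.cartesian_product f_def split_beta del: UNIV_Times_UNIV)
  finally show ?thesis .
qed

lemma sig4:
  assumes "Suc p < n" "w' \<in> words n"
  shows "appv n (Phi_sigma (Suc p)) v w' =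
     Rc False False (w'!p) (w'!Suc p) * v (w'[p:=False, Suc p:=False])
   + Rc False True (w'!p) (w'!Suc p) * v (w'[p:=False, Suc p:=True])
   + Rc True False (w'!p) (w'!Suc p) * v (w'[p:=True, Suc p:=False])
   + Rc True True (w'!p) (w'!Suc p) * v (w'[p:=True, Suc p:=True])"
  using sigma_apply[of "Suc p" n w' v] assms by (simp add: UNIV_bool)

definition fb :: "bool \<Rightarrow> K" where "fb b = (if b then -1 else 1)"
definition sg :: "bool list \<Rightarrow> nat \<Rightarrow> K" where "sg w i = (\<Prod>j<i. fb (w!j))"

lemma fb_sq[simp]: "fb a * fb a = 1" by (simp add: fb_def)

lemma sg_Suc: "sg w (Suc i) = sg w i * fb (w!i)" by (simp add: sg_def)

lemma sg_update:
  "sg (w[j:=a]) i = (if j < i \<and> j < length w then sg w i * fb a * fb (w!j) else sg w i)"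
proof (cases "j < i \<and> j < length w")
  case True
  define R where "R = (\<Prod>k\<in>{..<i}-{j}. fb (w!k))"
  have R2: "(\<Prod>k\<in>{..<i}-{j}. fb (w[j:=a]!k)) = R"
    unfolding R_def by (rule prod.cong) (auto simp: nth_list_update)
  have "sg (w[j:=a]) i = fb (w[j:=a]!j) * (\<Prod>k\<in>{..<i}-{j}. fb (w[j:=a]!k))"
    unfolding sg_def using True by (subst prod.remove[of _ j]) auto
  also have "\<dots> = fb a * R" using True R2 by simp
  finally have 1: "sg (w[j:=a]) i = fb a * R" .
  have 2: "sg w i = fb (w!j) * R"
    unfolding sg_def R_def using True by (subst prod.remove[of _ j]) auto
  have "sg w i * fb a * fb (w!j) = fb a * R"
    unfolding 2 by (cases "w!j") (simp_all add: fb_def)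
  then show ?thesis using 1 True by auto
next
  case False
  have "sg (w[j:=a]) i = sg w i"
    unfolding sg_def using False by (intro prod.cong) (auto simp: nth_list_update list_update_beyond)
  then show ?thesis using False by auto
qed

definition cr1 :: "nat \<Rightarrow> nat \<Rightarrow> (bool list \<Rightarrow> K) \<Rightarrow> (bool list \<Rightarrow> K)" where
  "cr1 n i v = (\<lambda>w. if w \<in> words n \<and> i < n \<and> w!i then sg w i * v (w[i:=False]) else 0)"

lemma upd3: "i \<noteq> p \<Longrightarrow> i \<noteq> t \<Longrightarrow> w[p:=a, t:=b, i:=c] = w[i:=c, p:=a, t:=b]"
  by (metis list_update_swap)

lemma words_upd[simp]: "(w[j:=a] \<in> words n) = (w \<in> words n)" by (simp add: words_def)

lemma comm_other:
  assumes "Suc p < n" "i < n" "i \<noteq> p" "i \<noteq> Suc p"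
  shows "appv n (Phi_sigma (Suc p)) (cr1 n i v) = cr1 n i (appv n (Phi_sigma (Suc p)) v)"
proof (rule ext)
  fix w'
  show "appv n (Phi_sigma (Suc p)) (cr1 n i v) w' = cr1 n i (appv n (Phi_sigma (Suc p)) v) w'"
  proof (cases "w' \<in> words n")
    case True
    then have len: "length w' = n" by (simp add: words_def)
    have r: "cr1 n i (appv n (Phi_sigma (Suc p)) v) w' =
       (if w'!i then sg w' i * appv n (Phi_sigma (Suc p)) v (w'[i:=False]) else 0)"
      using True assms by (simp add: cr1_def)
    show ?thesis
      unfolding r
      apply (subst sig4[OF assms(1) True])
      apply (subst sig4[OF assms(1)], simp add: True)
      using assms len True
      apply (cases "w'!p"; cases "w'!Suc p"; cases "i < p")
      apply (simp_all add: cr1_def sg_update nth_list_update upd3 Rc_def fb_def algebra_simps)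
      done
  qed (simp add: appv_def cr1_def)
qed

lemma upd_a: "p \<noteq> t \<Longrightarrow> w[t:=c, p:=a, t:=b] = w[p:=a, t:=b]"
  by (metis list_update_overwrite list_update_swap)
lemma upd_b: "p \<noteq> t \<Longrightarrow> w[p:=c, p:=a, t:=b] = w[p:=a, t:=b]"
  by simp
lemma upd_c: "p \<noteq> t \<Longrightarrow> w[p:=a, t:=b, p:=c] = w[p:=c, t:=b]"
  by (metis list_update_overwrite list_update_swap)

lemma upd_sw[simp]: "w[Suc p := b, p := a] = w[p:=a, Suc p:=b]"
  by (simp add: list_update_swap)
lemma qq_inv1[simp]: "qq * (inverse qq * x) = x" "inverse qq * (qq * x) = x"
  using qq_ne0 by (simp_all add: mult.assoc[symmetric])

lemma comm_p:
  assumes "Suc p < n"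
  shows "appv n (Phi_sigma (Suc p)) (cr1 n p v)
     = (\<lambda>w. inverse qq * cr1 n (Suc p) (appv n (Phi_sigma (Suc p)) v) w)"
proof (rule ext)
  fix w'
  show "appv n (Phi_sigma (Suc p)) (cr1 n p v) w' = inverse qq * cr1 n (Suc p) (appv n (Phi_sigma (Suc p)) v) w'"
  proof (cases "w' \<in> words n")
    case True
    then have len: "length w' = n" by (simp add: words_def)
    have r: "cr1 n (Suc p) (appv n (Phi_sigma (Suc p)) v) w' =
       (if w'!Suc p then sg w' (Suc p) * appv n (Phi_sigma (Suc p)) v (w'[Suc p:=False]) else 0)"
      using True assms by (simp add: cr1_def)
    show ?thesis
      unfolding r
      apply (subst sig4[OF assms(1) True])
      apply (subst sig4[OF assms(1)], simp add: True)
      using assms len True qq_ne0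
      apply (cases "w'!p"; cases "w'!Suc p")
      apply (simp_all add: cr1_def sg_update nth_list_update upd_a upd_c sg_Suc Rc_def fb_def algebra_simps)
      done
  qed (simp add: appv_def cr1_def)
qed

lemma comm_p1:
  assumes "Suc p < n"
  shows "appv n (Phi_sigma (Suc p)) (cr1 n (Suc p) v)
     = (\<lambda>w. inverse qq * cr1 n p (appv n (Phi_sigma (Suc p)) v) w
          + inverse qq * (qq - inverse qq) * cr1 n (Suc p) (appv n (Phi_sigma (Suc p)) v) w)"
proof (rule ext)
  fix w'
  show "appv n (Phi_sigma (Suc p)) (cr1 n (Suc p) v) w' = inverse qq * cr1 n p (appv n (Phi_sigma (Suc p)) v) w'
          + inverse qq * (qq - inverse qq) * cr1 n (Suc p) (appv n (Phi_sigma (Suc p)) v) w'"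
  proof (cases "w' \<in> words n")
    case True
    then have len: "length w' = n" by (simp add: words_def)
    have r: "cr1 n (Suc p) (appv n (Phi_sigma (Suc p)) v) w' =
       (if w'!Suc p then sg w' (Suc p) * appv n (Phi_sigma (Suc p)) v (w'[Suc p:=False]) else 0)"
      using True assms by (simp add: cr1_def)
    have r2: "cr1 n p (appv n (Phi_sigma (Suc p)) v) w' =
       (if w'!p then sg w' p * appv n (Phi_sigma (Suc p)) v (w'[p:=False]) else 0)"
      using True assms by (simp add: cr1_def)
    show ?thesis
      unfolding r r2
      apply (subst sig4[OF assms(1) True])
      apply (subst sig4[OF assms(1)], simp add: True)
      apply (subst sig4[OF assms(1)], simp add: True)
      using assms len True qq_ne0
      apply (cases "w'!p"; cases "w'!Suc p")
      apply (simp_all add: cr1_def sg_update nth_list_update upd_a upd_c sg_Suc Rc_def fb_def algebra_simps)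
      done
  qed (simp add: appv_def cr1_def)
qed

definition crx :: "nat \<Rightarrow> (nat \<Rightarrow> K) \<Rightarrow> (bool list \<Rightarrow> K) \<Rightarrow> (bool list \<Rightarrow> K)" where
  "crx n x v = (\<lambda>w. \<Sum>i<n. x i * cr1 n i v w)"

definition Mt :: "nat \<Rightarrow> (nat \<Rightarrow> K) \<Rightarrow> (nat \<Rightarrow> K)" where
  "Mt p x = (\<lambda>j. if j = p then inverse qq * x (Suc p)
     else if j = Suc p then inverse qq * x p + inverse qq * (qq - inverse qq) * x (Suc p) else x j)"

lemma appv_sum: "appv n A (\<lambda>u. \<Sum>i\<in>I. f i u) w = (\<Sum>i\<in>I. appv n A (f i) w)"
  by (simp add: appv_def sum_distrib_left sum.swap[of _ I])

lemma sum3: "finite A \<Longrightarrow> a \<in> A \<Longrightarrow> b \<in> A \<Longrightarrow> a \<noteq> b \<Longrightarrow>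
   sum f A = f a + f b + sum f (A - {a, b})"
  by (metis (no_types, lifting) Diff_insert2 add.assoc finite_Diff insert_Diff insert_iff sum.insert_remove sum.remove)

lemma comm_crx:
  assumes "Suc p < n"
  shows "appv n (Phi_sigma (Suc p)) (crx n x v) = crx n (Mt p x) (appv n (Phi_sigma (Suc p)) v)"
proof (rule ext)
  fix w
  let ?S = "appv n (Phi_sigma (Suc p)) v"
  let ?R = "{..<n} - {p, Suc p}"
  have "appv n (Phi_sigma (Suc p)) (crx n x v) w = (\<Sum>i<n. x i * appv n (Phi_sigma (Suc p)) (cr1 n i v) w)"
    unfolding crx_def by (simp add: appv_sum appv_scale)
  also have "\<dots> = x p * appv n (Phi_sigma (Suc p)) (cr1 n p v) w
      + x (Suc p) * appv n (Phi_sigma (Suc p)) (cr1 n (Suc p) v) w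
      + (\<Sum>i\<in>?R. x i * appv n (Phi_sigma (Suc p)) (cr1 n i v) w)"
    using assms by (intro sum3) auto
  also have "(\<Sum>i\<in>?R. x i * appv n (Phi_sigma (Suc p)) (cr1 n i v) w) = (\<Sum>i\<in>?R. Mt p x i * cr1 n i ?S w)"
    using assms by (intro sum.cong) (auto simp: comm_other Mt_def)
  also have "x p * appv n (Phi_sigma (Suc p)) (cr1 n p v) w
      + x (Suc p) * appv n (Phi_sigma (Suc p)) (cr1 n (Suc p) v) w
      = Mt p x p * cr1 n p ?S w + Mt p x (Suc p) * cr1 n (Suc p) ?S w"
    using assms by (simp add: comm_p comm_p1 Mt_def algebra_simps)
  also have "Mt p x p * cr1 n p ?S w + Mt p x (Suc p) * cr1 n (Suc p) ?S w + (\<Sum>i\<in>?R. Mt p x i * cr1 n i ?S w)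
     = crx n (Mt p x) ?S w"
    unfolding crx_def using assms by (intro sum3[symmetric]) auto
  finally show "appv n (Phi_sigma (Suc p)) (crx n x v) w = crx n (Mt p x) ?S w" .
qed

fun Dv :: "nat \<Rightarrow> (nat \<Rightarrow> K) \<Rightarrow> (nat \<Rightarrow> K)" where
  "Dv 0 x = x"
| "Dv (Suc k) x = Mt k (Dv k x)"

lemma supv_cr1[simp]: "supv n (cr1 n i v)" by (simp add: supv_def cr1_def)
lemma supv_crx[simp]: "supv n (crx n x v)" by (simp add: supv_def crx_def cr1_def)

lemma comm_desc:
  assumes "k < n" "supv n v"
  shows "appv n (Phi_desc n k) (crx n x v) = crx n (Dv k x) (appv n (Phi_desc n k) v)"
  using assms(1)
proof (induction k)
  case 0 then show ?case using assms(2) by (simp add: appv_mid)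
next
  case (Suc k)
  then show ?case by (simp add: appv_mmul comm_crx)
qed

lemma comm_mpow:
  assumes "1 \<le> n" "supv n v"
  shows "appv n (mpow n (Phi_desc n (n-1)) j) (crx n x v) = crx n ((Dv (n-1) ^^ j) x) (appv n (mpow n (Phi_desc n (n-1)) j) v)"
proof (induction j)
  case 0 then show ?case using assms(2) by (simp add: appv_mid)
next
  case (Suc j)
  then show ?case using assms by (simp add: appv_mmul comm_desc)
qed

lemma cr1_add: "cr1 n i (\<lambda>u. f u + g u) = (\<lambda>w. cr1 n i f w + cr1 n i g w)"
  by (rule ext) (simp add: cr1_def algebra_simps)
lemma cr1_scale: "cr1 n i (\<lambda>u. a * f u) = (\<lambda>w. a * cr1 n i f w)"
  by (rule ext) (simp add: cr1_def algebra_simps)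
lemma cr1_zero: "cr1 n i (\<lambda>u. 0) = (\<lambda>w. 0)"
  by (rule ext) (simp add: cr1_def)
lemma cr1_sum: "cr1 n i (\<lambda>u. \<Sum>j\<in>A. f j u) = (\<lambda>w. \<Sum>j\<in>A. cr1 n i (f j) w)"
proof (rule ext)
  fix w show "cr1 n i (\<lambda>u. \<Sum>j\<in>A. f j u) w = (\<Sum>j\<in>A. cr1 n i (f j) w)"
    by (cases "w \<in> words n \<and> i < n \<and> w!i") (auto simp add: cr1_def sum_distrib_left)
qed

lemma crx_add_v: "crx n x (\<lambda>u. f u + g u) = (\<lambda>w. crx n x f w + crx n x g w)"
  by (rule ext) (simp add: crx_def cr1_add algebra_simps sum.distrib)
lemma crx_scale_v: "crx n x (\<lambda>u. a * f u) = (\<lambda>w. a * crx n x f w)"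
  by (rule ext) (simp add: crx_def cr1_scale sum_distrib_left mult.left_commute)
lemma crx_zero_v: "crx n x (\<lambda>u. 0) = (\<lambda>w. 0)"
  by (rule ext) (simp add: crx_def cr1_zero)
lemma crx_add_x: "crx n (\<lambda>j. x j + y j) v = (\<lambda>w. crx n x v w + crx n y v w)"
  by (rule ext) (simp add: crx_def algebra_simps sum.distrib)
lemma crx_scale_x: "crx n (\<lambda>j. a * x j) v = (\<lambda>w. a * crx n x v w)"
  by (rule ext) (simp add: crx_def sum_distrib_left mult.assoc)
lemma crx_cong: "(\<And>j. j < n \<Longrightarrow> x j = y j) \<Longrightarrow> crx n x v = crx n y v"
  by (rule ext) (simp add: crx_def)

lemma anticomm: "cr1 n i (cr1 n j v) w = - cr1 n j (cr1 n i v) w"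
proof (cases "w \<in> words n \<and> i < n \<and> j < n \<and> i \<noteq> j")
  case True
  then have len: "length w = n" by (simp add: words_def)
  show ?thesis using True len
    by (cases "i < j") (auto simp: cr1_def sg_update nth_list_update list_update_swap[of i j] fb_def)
next
  case False
  then show ?thesis by (auto simp: cr1_def nth_list_update words_def)
qed

lemma crx_anti: "crx n x (crx n y v) w = - crx n y (crx n x v) w"
proof -
  have "crx n x (crx n y v) w = (\<Sum>i<n. \<Sum>j<n. x i * y j * cr1 n i (cr1 n j v) w)"
    unfolding crx_def by (simp add: cr1_sum cr1_scale sum_distrib_left mult.assoc)
  also have "\<dots> = (\<Sum>i<n. \<Sum>j<n. - (x i * y j * cr1 n j (cr1 n i v) w))"
    by (intro sum.cong refl) (subst anticomm, simp)
  also have "\<dots> = - (\<Sum>j<n. \<Sum>i<n. y j * x i * cr1 n j (cr1 n i v) w)"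
    by (subst sum.swap) (simp add: sum_negf mult.commute)
  also have "\<dots> = - crx n y (crx n x v) w"
    unfolding crx_def by (simp add: cr1_sum cr1_scale sum_distrib_left mult.assoc)
  finally show ?thesis .
qed

lemma two_ne: "(2::K) \<noteq> 0"
proof -
  have a: "(2::K) = Fract (of_nat 2) 1" by (subst Fract_of_nat_eq) simp
  have b: "Fract (of_nat 2) 1 \<noteq> (Fract 0 1 :: K)"
    by (subst eq_fract(1)) auto
  show ?thesis using a b by (metis Zero_fract_def)
qed

lemma crx_sq: "crx n x (crx n x v) = (\<lambda>w. 0)"
proof (rule ext)
  fix w
  have "crx n x (crx n x v) w = - crx n x (crx n x v) w" by (rule crx_anti)
  then have "2 * crx n x (crx n x v) w = 0" by (simp add: algebra_simps)
  then show "crx n x (crx n x v) w = 0" using two_ne by simp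
qed

lemma rep_iff: "length u = n \<Longrightarrow> (u = replicate n c) = (\<forall>i<n. u!i = c)"
  by (auto simp: list_eq_iff_nth_eq)

lemma sig_const:
  assumes "Suc p < n"
  shows "appv n (Phi_sigma (Suc p)) (\<lambda>w. if w = replicate n c then 1 else 0)
     = (\<lambda>w. Rc c c c c * (if w = replicate n c then 1 else 0))"
proof (rule ext)
  fix w'
  show "appv n (Phi_sigma (Suc p)) (\<lambda>w. if w = replicate n c then 1 else 0) w' =
         Rc c c c c * (if w' = replicate n c then 1 else 0)"
  proof (cases "w' \<in> words n")
    case True
    then have len: "length w' = n" by (simp add: words_def)
    let ?P = "\<forall>i<n. i \<noteq> p \<and> i \<noteq> Suc p \<longrightarrow> w'!i = c"
    have e1: "(w'[p:=a, Suc p:=b] = replicate n c) = (a = c \<and> b = c \<and> ?P)" for a b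
    proof -
      have "(w'[p:=a, Suc p:=b] = replicate n c) = (\<forall>i<n. w'[p:=a, Suc p:=b]!i = c)"
        by (rule rep_iff) (simp add: len)
      also have "\<dots> = (a = c \<and> b = c \<and> ?P)"
      proof
        assume h: "\<forall>i<n. w'[p:=a, Suc p:=b]!i = c"
        have "a = c" using h[rule_format, of p] assms len by simp
        moreover have "b = c" using h[rule_format, of "Suc p"] assms len by simp
        moreover have ?P
        proof (intro allI impI)
          fix i assume "i < n" "i \<noteq> p \<and> i \<noteq> Suc p"
          then show "w'!i = c" using h[rule_format, of i] len by simp
        qed
        ultimately show "a = c \<and> b = c \<and> ?P" by blast
      next
        assume h: "a = c \<and> b = c \<and> ?P"
        show "\<forall>i<n. w'[p:=a, Suc p:=b]!i = c"
        proof (intro allI impI)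
          fix i assume "i < n"
          then show "w'[p:=a, Suc p:=b]!i = c" using h len assms by (cases "i = p"; cases "i = Suc p") auto
        qed
      qed
      finally show ?thesis .
    qed
    have e2: "(w' = replicate n c) = (w'!p = c \<and> w'!Suc p = c \<and> ?P)"
    proof -
      have "(w' = replicate n c) = (\<forall>i<n. w'!i = c)" by (rule rep_iff) (simp add: len)
      also have "\<dots> = (w'!p = c \<and> w'!Suc p = c \<and> ?P)"
      proof
        assume h: "\<forall>i<n. w'!i = c"
        then show "w'!p = c \<and> w'!Suc p = c \<and> ?P" using assms by auto
      next
        assume h: "w'!p = c \<and> w'!Suc p = c \<and> ?P"
        show "\<forall>i<n. w'!i = c"
        proof (intro allI impI)
          fix i assume "i < n"
          then show "w'!i = c" using h by (cases "i = p"; cases "i = Suc p") auto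
        qed
      qed
      finally show ?thesis .
    qed
    show ?thesis
      apply (subst sig4[OF assms True])
      unfolding e1 e2
      by (cases c; cases "w'!p"; cases "w'!Suc p") (simp_all only: Rc_def; simp)+
  qed (auto simp: appv_def words_def)
qed

fun Lr :: "(nat \<Rightarrow> K) \<Rightarrow> nat \<Rightarrow> K" where
  "Lr x 0 = x 0"
| "Lr x (Suc k) = inverse qq * Lr x k + inverse qq * (qq - inverse qq) * x (Suc k)"

lemma Dv_closed: "Dv k x j = (if j < k then inverse qq * x (Suc j) else if j = k then Lr x k else x j)"
  by (induction k arbitrary: j) (auto simp: Mt_def)

lemma Lr_cong: "(\<And>j. j \<le> k \<Longrightarrow> x j = y j) \<Longrightarrow> Lr x k = Lr y k"
  by (induction k) auto

lemma Dv_cong: "(\<And>j. j < n \<Longrightarrow> x j = y j) \<Longrightarrow> k < n \<Longrightarrow> j < n \<Longrightarrow> Dv k x j = Dv k y j"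
  unfolding Dv_closed by (auto intro!: Lr_cong)

lemma Mt_scale: "Mt p (\<lambda>j. a * x j) = (\<lambda>j. a * Mt p x j)"
  by (rule ext) (simp add: Mt_def algebra_simps)

lemma Dv_scale: "Dv k (\<lambda>j. a * x j) = (\<lambda>j. a * Dv k x j)"
  by (induction k) (simp_all add: Mt_scale)

definition u0 :: "nat \<Rightarrow> K" where "u0 j = qq ^ j"

lemma Lr_u0: "Lr u0 k = qq ^ k"
proof (induction k)
  case (Suc k)
  have "inverse qq * qq ^ k + inverse qq * (qq - inverse qq) * qq ^ Suc k
      = qq ^ k * (inverse qq + (qq - inverse qq) * (inverse qq * qq))"
    by (simp add: algebra_simps)
  also have "\<dots> = qq ^ Suc k" using qq_ne0 by simp
  finally show ?case using Suc by (simp add: u0_def)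
qed (simp add: u0_def)

lemma D1_u0: "1 \<le> n \<Longrightarrow> j < n \<Longrightarrow> Dv (n-1) u0 j = u0 j"
  by (auto simp: Dv_closed Lr_u0 u0_def)

lemma Dpow_u0: assumes n: "1 \<le> n" shows "j < n \<Longrightarrow> (Dv (n-1) ^^ m) u0 j = u0 j"
proof (induction m arbitrary: j)
  case (Suc m)
  have "(Dv (n-1) ^^ Suc m) u0 j = Dv (n-1) ((Dv (n-1) ^^ m) u0) j" by simp
  also have "\<dots> = Dv (n-1) u0 j" using Suc n by (intro Dv_cong) auto
  also have "\<dots> = u0 j" using Suc D1_u0[OF n] by simp
  finally show ?case .
qed simp

definition yv :: "(nat \<Rightarrow> K) \<Rightarrow> nat \<Rightarrow> K" where "yv P = (\<lambda>j. inverse qq ^ j * P j)"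

lemma Lr_yv: "Lr (yv P) k = inverse qq ^ k * P 0 + (qq - inverse qq) * inverse qq ^ Suc k * (\<Sum>i\<in>{1..k}. P i)"
proof (induction k)
  case 0 then show ?case by (simp add: yv_def)
next
  case (Suc k)
  have "Lr (yv P) (Suc k) = inverse qq * Lr (yv P) k + inverse qq * (qq - inverse qq) * (inverse qq ^ Suc k * P (Suc k))"
    by (simp add: yv_def)
  also have "\<dots> = inverse qq * (inverse qq ^ k * P 0 + (qq - inverse qq) * inverse qq ^ Suc k * (\<Sum>i\<in>{1..k}. P i))
      + inverse qq * (qq - inverse qq) * (inverse qq ^ Suc k * P (Suc k))"
    by (simp only: Suc.IH)
  also have "(\<Sum>i\<in>{1..Suc k}. P i) = (\<Sum>i\<in>{1..k}. P i) + P (Suc k)" by simp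
  ultimately show ?case by (simp add: algebra_simps)
qed

lemma sum_split0: "1 \<le> (n::nat) \<Longrightarrow> (\<Sum>i<n. P i) = P 0 + (\<Sum>i\<in>{1..n-1}. P i)"
proof -
  assume "1 \<le> n"
  then have "{..<n} = {0..n-1}" by (cases n) auto
  then show ?thesis by (simp add: sum.atLeast_Suc_atMost)
qed

lemma D1_yv:
  assumes "1 \<le> n" "(\<Sum>i<n. P i) = 0" "j < n"
  shows "Dv (n-1) (yv P) j = inverse qq ^ 2 * yv (\<lambda>i. P (Suc i mod n)) j"
proof (cases "j < n - 1")
  case True
  then show ?thesis by (simp add: Dv_closed yv_def algebra_simps power2_eq_square)
next
  case False
  then have j: "j = n - 1" using assms by simp
  have s: "(\<Sum>i\<in>{Suc 0..n - Suc 0}. P i) = - P 0" using sum_split0[OF assms(1), of P] assms(2)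
    by (simp add: add_eq_0_iff)
  have m: "Suc (n-1) mod n = 0" using assms by simp
  have "Dv (n-1) (yv P) j = inverse qq ^ (n-1) * P 0 - (qq - inverse qq) * inverse qq ^ Suc (n-1) * P 0"
    using j by (simp add: Dv_closed Lr_yv s)
  also have "\<dots> = inverse qq ^ (n-1) * P 0 * (1 - (qq * inverse qq) + inverse qq * inverse qq)"
    by (simp add: algebra_simps)
  also have "\<dots> = inverse qq ^ 2 * (inverse qq ^ (n-1) * P 0)"
    using qq_ne0 by (simp add: algebra_simps power2_eq_square)
  finally show ?thesis using j m by (simp add: yv_def)
qed

lemma rot_sum: "1 \<le> (n::nat) \<Longrightarrow> (\<Sum>i<n. P (Suc i mod n)) = (\<Sum>i<n. P i)"
proof -
  assume "1 \<le> n"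
  then obtain m where n: "n = Suc m" by (cases n) auto
  have "(\<Sum>i<Suc m. P (Suc i mod Suc m)) = (\<Sum>i<m. P (Suc i mod Suc m)) + P 0"
    by simp
  also have "(\<Sum>i<m. P (Suc i mod Suc m)) = (\<Sum>i<m. P (Suc i))"
    by (intro sum.cong) auto
  also have "(\<Sum>i<m. P (Suc i)) + P 0 = (\<Sum>i<Suc m. P i)"
    by (subst sum.lessThan_Suc_shift) (simp add: add.commute)
  finally show ?thesis using n by simp
qed

lemma shift_sum: "1 \<le> (n::nat) \<Longrightarrow> (\<Sum>i<n. P ((i + k) mod n)) = (\<Sum>i<n. P i)"
proof (induction k)
  case (Suc k)
  have "(\<Sum>i<n. P ((i + Suc k) mod n)) = (\<Sum>i<n. (\<lambda>i. P ((i + k) mod n)) (Suc i mod n))"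
    by (intro sum.cong refl) (simp add: mod_add_left_eq)
  also have "\<dots> = (\<Sum>i<n. P ((i + k) mod n))" using rot_sum[OF Suc.prems, of "\<lambda>i. P ((i + k) mod n)"] by simp
  finally show ?case using Suc by simp
qed simp

lemma Dpow_yv:
  assumes "1 \<le> n" "(\<Sum>i<n. P i) = 0" "j < n"
  shows "(Dv (n-1) ^^ k) (yv P) j = inverse qq ^ (2*k) * yv (\<lambda>i. P ((i + k) mod n)) j"
  using assms(3)
proof (induction k arbitrary: j)
  case 0 then show ?case by (simp add: yv_def)
next
  case (Suc k)
  let ?Pk = "\<lambda>i. P ((i + k) mod n)"
  have sk: "(\<Sum>i<n. ?Pk i) = 0" using shift_sum[OF assms(1), of P k] assms(2) by simp
  have "(Dv (n-1) ^^ Suc k) (yv P) j = Dv (n-1) ((Dv (n-1) ^^ k) (yv P)) j" by simp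
  also have "\<dots> = Dv (n-1) (\<lambda>i. inverse qq ^ (2*k) * yv ?Pk i) j"
    using Suc assms by (intro Dv_cong) auto
  also have "\<dots> = inverse qq ^ (2*k) * Dv (n-1) (yv ?Pk) j" by (simp add: Dv_scale)
  also have "\<dots> = inverse qq ^ (2*k) * (inverse qq ^ 2 * yv (\<lambda>i. ?Pk (Suc i mod n)) j)"
    using D1_yv[OF assms(1) sk Suc.prems] by simp
  also have "yv (\<lambda>i. ?Pk (Suc i mod n)) j = yv (\<lambda>i. P ((i + Suc k) mod n)) j"
    by (simp add: yv_def mod_add_left_eq)
  finally show ?case by (simp add: power_add algebra_simps power2_eq_square)
qed

lemma N_yv:
  assumes "1 \<le> n" "(\<Sum>i<n. P i) = 0" "j < n"
  shows "(Dv (n-1) ^^ n) (yv P) j = inverse qq ^ (2*n) * yv P j"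
  using Dpow_yv[OF assms, of n] assms(3) by (simp add: yv_def)

lemma qq_pow: "qq ^ k = Fract ([:0,1:]^k) 1"
  unfolding qq_def by (induction k) (auto simp: One_fract_def)
lemma qq_pow_ne1: "k > 0 \<Longrightarrow> qq ^ k \<noteq> 1"
  by (auto simp: qq_pow One_fract_def eq_fract dest: arg_cong[where f=degree] simp: degree_power_eq)

lemma Z_ne: "1 \<le> n \<Longrightarrow> (\<Sum>j<n. qq ^ (2*j)) \<noteq> 0"
proof
  assume n: "1 \<le> n" and z: "(\<Sum>j<n. qq ^ (2*j)) = 0"
  have "(qq^2) ^ n - 1 = (qq^2 - 1) * (\<Sum>j<n. (qq^2) ^ j)" by (rule power_diff_1_eq)
  also have "(\<Sum>j<n. (qq^2) ^ j) = (\<Sum>j<n. qq ^ (2*j))" by (simp add: power_mult)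
  finally have "qq ^ (2*n) = 1" using z by (simp add: power_mult)
  with qq_pow_ne1[of "2*n"] n show False by simp
qed

lemma decomp:
  assumes "1 \<le> n" "i < n"
  obtains \<alpha> P where "(\<Sum>j<n. P j) = 0"
    "\<And>j. (if j = i then 1 else 0) = \<alpha> * u0 j + yv P j"
proof -
  define Z where "Z = (\<Sum>j<n. qq ^ (2*j))"
  have Z: "Z \<noteq> 0" using Z_ne[OF assms(1)] by (simp add: Z_def)
  define \<alpha> where "\<alpha> = qq ^ i / Z"
  define P where "P = (\<lambda>j. qq ^ j * ((if j = i then 1 else 0) - \<alpha> * u0 j))"
  have Pj: "P j = (if j = i then qq ^ j else 0) - \<alpha> * qq ^ (2*j)" for j
    by (simp add: P_def u0_def algebra_simps power_add[symmetric] mult_2[symmetric])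
  have "(\<Sum>j<n. P j) = (\<Sum>j<n. (if j = i then qq ^ j else 0)) - \<alpha> * Z"
    by (simp only: Pj sum_subtractf Z_def sum_distrib_left)
  also have "\<dots> = 0" using assms Z by (simp add: \<alpha>_def)
  finally have 1: "(\<Sum>j<n. P j) = 0" .
  have 2: "(if j = i then 1 else 0) = \<alpha> * u0 j + yv P j" for j
  proof -
    have "inverse qq ^ j * qq ^ j = 1" using qq_ne0 by (simp add: power_mult_distrib[symmetric])
    then show ?thesis by (simp add: yv_def P_def mult.assoc[symmetric])
  qed
  show thesis using that 1 2 by blast
qed

definition lam :: "nat \<Rightarrow> int \<Rightarrow> K" where
  "lam n k = qq powi (int n * (int n - 1 - 2 * k))"

lemma lam_step: "lam n (k + 1) = inverse qq ^ (2*n) * lam n k"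
proof -
  have e: "int n * (int n - 1 - 2 * (k + 1)) = int n * (int n - 1 - 2 * k) + (- int (2*n))" by (simp add: algebra_simps)
  have "lam n (k+1) = qq powi (int n * (int n - 1 - 2 * k)) * qq powi (- int (2*n))"
    unfolding lam_def e using qq_ne0 power_int_add[of qq "int n * (int n - 1 - 2 * k)" "- int (2*n)"]
    by simp
  also have "qq powi (- int (2*n)) = inverse qq ^ (2*n)"
    by (simp only: power_int_minus power_int_of_nat power_inverse)
  finally show ?thesis by (simp add: lam_def mult.commute)
qed

definition vac :: "nat \<Rightarrow> bool list \<Rightarrow> K" where
  "vac n = (\<lambda>w. if w = replicate n False then 1 else 0)"

definition ew :: "bool list \<Rightarrow> bool list \<Rightarrow> K" where
  "ew w = (\<lambda>u. if u = w then 1 else 0)"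

lemma supv_ew: "w \<in> words n \<Longrightarrow> supv n (ew w)" by (auto simp: supv_def ew_def)

lemma const_desc:
  assumes "k < n"
  shows "appv n (Phi_desc n k) (\<lambda>w. if w = replicate n c then 1 else 0)
     = (\<lambda>w. Rc c c c c ^ k * (if w = replicate n c then 1 else 0))"
  using assms
proof (induction k)
  case 0
  have "supv n (\<lambda>w. if w = replicate n c then 1 else 0)" by (simp add: supv_def words_def)
  then show ?case by (simp add: appv_mid)
next
  case (Suc k)
  then have "appv n (Phi_desc n (Suc k)) (\<lambda>w. if w = replicate n c then 1 else 0)
     = appv n (Phi_sigma (Suc k)) (\<lambda>w. Rc c c c c ^ k * (if w = replicate n c then 1 else 0))"
    by (simp add: appv_mmul)
  also have "\<dots> = (\<lambda>w. Rc c c c c ^ k * appv n (Phi_sigma (Suc k)) (\<lambda>w. if w = replicate n c then 1 else 0) w)"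
    by (rule ext) (simp only: appv_scale)
  also have "\<dots> = (\<lambda>w. Rc c c c c ^ Suc k * (if w = replicate n c then 1 else 0))"
    using Suc.prems by (simp add: sig_const algebra_simps)
  finally show ?case .
qed

lemma const_T:
  assumes "1 \<le> n"
  shows "appv n (Phi_tau n) (\<lambda>w. if w = replicate n c then 1 else 0)
     = (\<lambda>w. (Rc c c c c ^ (n-1)) ^ n * (if w = replicate n c then 1 else 0))"
  unfolding Phi_tau_def
  by (rule appv_mpow_eig) (use assms const_desc[of "n-1" n c] in \<open>auto simp: supv_def words_def\<close>)

lemma T_comm:
  assumes "1 \<le> n" "supv n v"
  shows "appv n (Phi_tau n) (crx n x v) = crx n ((Dv (n-1) ^^ n) x) (appv n (Phi_tau n) v)"
  unfolding Phi_tau_def by (rule comm_mpow[OF assms])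

lemma cnt_upd: "i < length w \<Longrightarrow> w!i \<Longrightarrow> length (filter id (w[i:=False])) + 1 = length (filter id w)"
  by (induction w arbitrary: i) (auto split: nat.splits)

lemma sg_first: "(\<forall>j<i. \<not> w!j) \<Longrightarrow> sg w i = 1"
  by (simp add: sg_def fb_def)

lemma ew_cr1:
  assumes "w \<in> words n" "i < n" "w!i" "\<forall>j<i. \<not> w!j"
  shows "ew w = cr1 n i (ew (w[i:=False]))"
proof (rule ext)
  fix u
  have len: "length w = n" using assms by (simp add: words_def)
  show "ew w u = cr1 n i (ew (w[i:=False])) u"
  proof (cases "u = w")
    case True then show ?thesis using assms by (simp add: ew_def cr1_def sg_first)
  next
    case False
    have "\<not> (u \<in> words n \<and> u!i \<and> u[i:=False] = w[i:=False])"
    proof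
      assume h: "u \<in> words n \<and> u!i \<and> u[i:=False] = w[i:=False]"
      then have lu: "length u = n" by (simp add: words_def)
      have "u = w"
      proof (rule nth_equalityI)
        show "length u = length w" using lu len by simp
        fix j assume j: "j < length u"
        show "u!j = w!j"
        proof (cases "j = i")
          case True then show ?thesis using h assms by simp
        next
          case False
          have "u[i:=False]!j = w[i:=False]!j" using h by simp
          then show ?thesis using False by simp
        qed
      qed
      then show False using \<open>u \<noteq> w\<close> by simp
    qed
    then show ?thesis using False assms by (auto simp: ew_def cr1_def)
  qed
qed

lemma cr1_crx: "i < n \<Longrightarrow> cr1 n i v = crx n (\<lambda>j. if j = i then 1 else 0) v"
proof (rule ext)
  fix w assume i: "i < n"
  have "crx n (\<lambda>j. if j = i then 1 else 0) v w = (\<Sum>j<n. if j = i then cr1 n j v w else 0)"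
    unfolding crx_def by (intro sum.cong) auto
  also have "\<dots> = cr1 n i v w" using i by (simp add: sum.delta')
  finally show "cr1 n i v w = crx n (\<lambda>j. if j = i then 1 else 0) v w" by simp
qed

lemma supv_comb: "supv n f \<Longrightarrow> supv n g \<Longrightarrow> supv n (\<lambda>u. a * f u + g u)"
  by (simp add: supv_def)

lemma good:
  assumes n: "2 \<le> n"
  shows "\<forall>w\<in>words n. length (filter id w) = k \<longrightarrow>
    (\<exists>v1 v2. ew w = (\<lambda>u. v1 u + v2 u) \<and> supv n v1 \<and> supv n v2 \<and>
       appv n (Phi_tau n) v1 = (\<lambda>u. lam n (int k) * v1 u) \<and>
       appv n (Phi_tau n) v2 = (\<lambda>u. lam n (int k - 1) * v2 u) \<and>
       crx n u0 v2 = (\<lambda>u. 0) \<and> (k = 0 \<longrightarrow> v2 = (\<lambda>u. 0)))"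
proof (induction k)
  case 0
  show ?case
  proof (intro ballI impI)
    fix w assume w: "w \<in> words n" "length (filter id w) = 0"
    have "w = replicate n False"
      using w by (auto simp: words_def filter_empty_conv intro!: replicate_eqI)
    then have ew: "ew w = vac n" by (simp add: ew_def vac_def)
    have T: "appv n (Phi_tau n) (vac n) = (\<lambda>u. lam n 0 * vac n u)"
    proof -
      have "appv n (Phi_tau n) (vac n) = (\<lambda>u. (Rc False False False False ^ (n-1)) ^ n * vac n u)"
        unfolding vac_def using const_T[of n False] n by simp
      also have "(Rc False False False False ^ (n-1)) ^ n = lam n 0"
      proof -
        have e: "int n * (int n - 1 - 2 * 0) = int ((n-1) * n)" using n by (simp add: of_nat_diff algebra_simps)
        have "lam n 0 = qq ^ ((n-1) * n)" unfolding lam_def by (simp only: e power_int_of_nat)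
        then show ?thesis by (simp add: Rc_def power_mult)
      qed
      finally show ?thesis .
    qed
    show "\<exists>v1 v2. ew w = (\<lambda>u. v1 u + v2 u) \<and> supv n v1 \<and> supv n v2 \<and>
       appv n (Phi_tau n) v1 = (\<lambda>u. lam n (int 0) * v1 u) \<and>
       appv n (Phi_tau n) v2 = (\<lambda>u. lam n (int 0 - 1) * v2 u) \<and>
       crx n u0 v2 = (\<lambda>u. 0) \<and> (0 = 0 \<longrightarrow> v2 = (\<lambda>u. 0))"
      apply (rule exI[of _ "vac n"], rule exI[of _ "\<lambda>u. 0"])
      using T ew supv_ew[OF w(1)] by (simp add: appv_zero crx_zero_v supv_def)
  qed
next
  case (Suc k)
  show ?case
  proof (intro ballI impI)
    fix w assume w: "w \<in> words n" "length (filter id w) = Suc k"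
    have len: "length w = n" using w by (simp add: words_def)
    have ex: "\<exists>j. j < n \<and> w!j"
    proof (rule ccontr)
      assume "\<not> ?thesis"
      then have "filter id w = []" using len by (auto simp: filter_empty_conv in_set_conv_nth)
      with w show False by simp
    qed
    define i where "i = (LEAST j. j < n \<and> w!j)"
    have i: "i < n \<and> w!i" unfolding i_def by (rule LeastI_ex[OF ex])
    have first: "\<forall>j<i. \<not> w!j"
    proof (intro allI impI)
      fix j assume "j < i"
      then have "\<not> (j < n \<and> w!j)" unfolding i_def by (rule not_less_Least)
      then show "\<not> w!j" using \<open>j < i\<close> i by simp
    qed
    define w0 where "w0 = w[i:=False]"
    have w0: "w0 \<in> words n" "length (filter id w0) = k"
      using w cnt_upd[of i w] i len by (auto simp: w0_def)
    obtain v1 v2 where IH: "ew w0 = (\<lambda>u. v1 u + v2 u)" "supv n v1" "supv n v2"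
       "appv n (Phi_tau n) v1 = (\<lambda>u. lam n (int k) * v1 u)"
       "appv n (Phi_tau n) v2 = (\<lambda>u. lam n (int k - 1) * v2 u)"
       "crx n u0 v2 = (\<lambda>u. 0)"
      using Suc.IH[rule_format, OF w0(1) w0(2)] by (elim exE conjE) (rule that)
    have n1: "1 \<le> n" using n by simp
    obtain \<alpha> P where P: "(\<Sum>j<n. P j) = 0" "\<And>j. (if j = i then 1 else 0) = \<alpha> * u0 j + yv P j"
      using decomp[OF n1, of i] i by blast
    define y where "y = yv P"
    define c where "c = inverse qq ^ (2*n)"
    have cy: "crx n ((Dv (n-1) ^^ n) y) V = (\<lambda>u. c * crx n y V u)" for V
    proof -
      have "crx n ((Dv (n-1) ^^ n) y) V = crx n (\<lambda>j. c * y j) V"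
        by (rule crx_cong) (use N_yv[OF n1 P(1)] in \<open>simp add: y_def c_def\<close>)
      then show ?thesis by (simp add: crx_scale_x)
    qed
    have cu: "crx n ((Dv (n-1) ^^ n) u0) V = crx n u0 V" for V
      by (rule crx_cong) (use Dpow_u0[OF n1] in simp)
    have ls: "c * lam n (int k) = lam n (int (Suc k))" "c * lam n (int k - 1) = lam n (int k)"
      using lam_step[of n "int k"] lam_step[of n "int k - 1"] by (simp_all add: c_def add.commute)
    define v1' where "v1' = crx n y v1"
    define v2' where "v2' = (\<lambda>u. \<alpha> * crx n u0 v1 u + crx n y v2 u)"
    have ewd: "ew w = (\<lambda>u. v1' u + v2' u)"
    proof -
      have "ew w = crx n (\<lambda>j. if j = i then 1 else 0) (ew w0)"
        using ew_cr1[OF w(1) conjunct1[OF i] conjunct2[OF i] first] cr1_crx[of i n] i by (simp add: w0_def)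
      also have "\<dots> = crx n (\<lambda>j. \<alpha> * u0 j + y j) (ew w0)"
        by (rule crx_cong) (simp add: P(2) y_def)
      also have "\<dots> = (\<lambda>u. v1' u + v2' u)"
        by (rule ext) (simp add: IH(1) crx_add_x crx_scale_x crx_add_v IH(6) v1'_def v2'_def algebra_simps)
      finally show ?thesis .
    qed
    have TA: "appv n (Phi_tau n) (crx n y v1) = (\<lambda>u. c * (lam n (int k) * crx n y v1 u))"
    proof -
      have "appv n (Phi_tau n) (crx n y v1) = crx n ((Dv (n-1) ^^ n) y) (appv n (Phi_tau n) v1)"
        by (rule T_comm[OF n1 IH(2)])
      also have "\<dots> = (\<lambda>u. c * crx n y (\<lambda>u. lam n (int k) * v1 u) u)" by (simp only: IH(4) cy)
      finally show ?thesis by (simp only: crx_scale_v)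
    qed
    have TB: "appv n (Phi_tau n) (crx n y v2) = (\<lambda>u. c * (lam n (int k - 1) * crx n y v2 u))"
    proof -
      have "appv n (Phi_tau n) (crx n y v2) = crx n ((Dv (n-1) ^^ n) y) (appv n (Phi_tau n) v2)"
        by (rule T_comm[OF n1 IH(3)])
      also have "\<dots> = (\<lambda>u. c * crx n y (\<lambda>u. lam n (int k - 1) * v2 u) u)" by (simp only: IH(5) cy)
      finally show ?thesis by (simp only: crx_scale_v)
    qed
    have TC: "appv n (Phi_tau n) (crx n u0 v1) = (\<lambda>u. lam n (int k) * crx n u0 v1 u)"
    proof -
      have "appv n (Phi_tau n) (crx n u0 v1) = crx n ((Dv (n-1) ^^ n) u0) (appv n (Phi_tau n) v1)"
        by (rule T_comm[OF n1 IH(2)])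
      also have "\<dots> = crx n u0 (\<lambda>u. lam n (int k) * v1 u)" by (simp only: IH(4) cu)
      finally show ?thesis by (simp only: crx_scale_v)
    qed
    have T1: "appv n (Phi_tau n) v1' = (\<lambda>u. lam n (int (Suc k)) * v1' u)"
      unfolding v1'_def TA using ls(1) by (simp add: mult.assoc[symmetric])
    have T2: "appv n (Phi_tau n) v2' = (\<lambda>u. lam n (int (Suc k) - 1) * v2' u)"
    proof (rule ext)
      fix u
      have "appv n (Phi_tau n) v2' u = \<alpha> * appv n (Phi_tau n) (crx n u0 v1) u + appv n (Phi_tau n) (crx n y v2) u"
        unfolding v2'_def by (simp add: appv_add appv_scale)
      also have "\<dots> = \<alpha> * (lam n (int k) * crx n u0 v1 u) + c * (lam n (int k - 1) * crx n y v2 u)"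
        by (simp only: TB TC mult.assoc)
      also have "\<dots> = lam n (int (Suc k) - 1) * v2' u"
        using ls(2) by (simp add: v2'_def algebra_simps)
      finally show "appv n (Phi_tau n) v2' u = lam n (int (Suc k) - 1) * v2' u" .
    qed
    have C: "crx n u0 v2' = (\<lambda>u. 0)"
    proof (rule ext)
      fix u
      have "crx n u0 v2' u = \<alpha> * crx n u0 (crx n u0 v1) u + crx n u0 (crx n y v2) u"
        unfolding v2'_def by (simp add: crx_add_v crx_scale_v)
      also have "crx n u0 (crx n y v2) u = - crx n y (crx n u0 v2) u" by (rule crx_anti)
      finally show "crx n u0 v2' u = 0" by (simp add: crx_sq IH(6) crx_zero_v)
    qed
    have S: "supv n v1'" "supv n v2'" by (simp_all add: v1'_def v2'_def supv_comb)
    show "\<exists>v1 v2. ew w = (\<lambda>u. v1 u + v2 u) \<and> supv n v1 \<and> supv n v2 \<and>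
       appv n (Phi_tau n) v1 = (\<lambda>u. lam n (int (Suc k)) * v1 u) \<and>
       appv n (Phi_tau n) v2 = (\<lambda>u. lam n (int (Suc k) - 1) * v2 u) \<and>
       crx n u0 v2 = (\<lambda>u. 0) \<and> (Suc k = 0 \<longrightarrow> v2 = (\<lambda>u. 0))"
      using ewd S T1 T2 C by blast
  qed
qed

lemma qq_powi_ne0: "qq powi e \<noteq> 0" using qq_ne0 by simp

lemma lam_inj:
  assumes "a < n" "b < n" "lam n (int a) = lam n (int b)" "1 \<le> n"
  shows "a = b"
proof (rule ccontr)
  assume ne: "a \<noteq> b"
  have gen: "False" if h: "lam n (int x) = lam n (int y)" "x < y" for x y
  proof -
    define E where "E = int n * (int n - 1 - 2 * int y)"
    define N where "N = 2 * n * (y - x)"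
    have e: "int n * (int n - 1 - 2 * int x) = E + int N"
      using \<open>x < y\<close> by (simp add: E_def N_def of_nat_diff algebra_simps)
    have p: "qq powi (E + int N) = qq powi E * qq powi (int N)"
      by (rule power_int_add) (simp add: qq_ne0)
    have "lam n (int x) = qq powi E * qq ^ N"
      unfolding lam_def e p by (simp only: power_int_of_nat)
    then have "qq powi E * qq ^ N = qq powi E * 1"
      using h by (simp add: lam_def E_def)
    then have "qq ^ N = 1" using qq_powi_ne0[of E] by (metis mult_left_cancel)
    moreover have "N > 0" using \<open>x < y\<close> assms(4) by (simp add: N_def)
    ultimately show False using qq_pow_ne1 by blast
  qed
  show False
  proof (cases "a < b")
    case True then show ?thesis using gen[OF assms(3)] by simp
  next
    case False then have "b < a" using ne by simp
    then show ?thesis using gen[OF assms(3)[symmetric]] by simp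
  qed
qed

definition Lp :: "nat \<Rightarrow> nat \<Rightarrow> K poly" where
  "Lp n i = smult (inverse (\<Prod>k\<in>{..<n}-{i}. (lam n (int i) - lam n (int k))))
                  (\<Prod>k\<in>{..<n}-{i}. [:- lam n (int k), 1:])"

lemma poly_Lp: "poly (Lp n i) x = inverse (\<Prod>k\<in>{..<n}-{i}. (lam n (int i) - lam n (int k))) * (\<Prod>k\<in>{..<n}-{i}. (x - lam n (int k)))"
  by (simp add: Lp_def poly_prod)

lemma poly_Lp_delta:
  assumes "1 \<le> n" "i < n" "m < n"
  shows "poly (Lp n i) (lam n (int m)) = (if i = m then 1 else 0)"
proof (cases "i = m")
  case True
  have "(\<Prod>k\<in>{..<n}-{i}. (lam n (int i) - lam n (int k))) \<noteq> 0"
    using lam_inj[OF _ assms(2) _ assms(1)] by (auto simp: prod_zero_iff)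
  then show ?thesis using True by (simp add: poly_Lp)
next
  case False
  have "(\<Prod>k\<in>{..<n}-{i}. (lam n (int m) - lam n (int k))) = 0"
    by (rule prod_zero) (use False assms in \<open>auto intro!: bexI[of _ m]\<close>)
  then show ?thesis using False by (simp add: poly_Lp)
qed

lemma degree_Lp: "1 \<le> n \<Longrightarrow> i < n \<Longrightarrow> degree (Lp n i) < n"
proof -
  assume n: "1 \<le> n" and i: "i < n"
  have "degree (\<Prod>k\<in>{..<n}-{i}. [:- lam n (int k), 1:]) \<le> (\<Sum>k\<in>{..<n}-{i}. 1)"
    using degree_prod_sum_le[of "{..<n}-{i}" "\<lambda>k. [:- lam n (int k), 1:]"] by (simp add: o_def)
  also have "\<dots> = n - 1" using i by simp
  finally have a: "degree (\<Prod>k\<in>{..<n}-{i}. [:- lam n (int k), 1:]) \<le> n - 1" .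
  have "degree (Lp n i) \<le> degree (\<Prod>k\<in>{..<n}-{i}. [:- lam n (int k), 1:])"
    unfolding Lp_def by (rule degree_smult_le)
  then show ?thesis using a n by linarith
qed

lemma poly_sum_n: "degree (p::K poly) < n \<Longrightarrow> poly p x = (\<Sum>k<n. coeff p k * x ^ k)"
proof -
  assume d: "degree p < n"
  have "poly p x = (\<Sum>k\<le>degree p. coeff p k * x ^ k)" by (simp add: poly_altdef)
  also have "\<dots> = (\<Sum>k<n. coeff p k * x ^ k)"
    by (rule sum.mono_neutral_left) (use d in \<open>auto simp: coeff_eq_0\<close>)
  finally show ?thesis .
qed

lemma Bmat_lam: "Bmat n k j = lam n (int j) ^ k"
proof -
  have e: "int k * int n * (int n - 1 - 2 * int j) = (int n * (int n - 1 - 2 * int j)) * int k"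
    by (simp add: algebra_simps)
  have "Bmat n k j = (qq powi (int n * (int n - 1 - 2 * int j))) powi (int k)"
    unfolding Bmat_def e by (rule power_int_mult)
  then show ?thesis by (simp only: lam_def power_int_of_nat)
qed

definition C0 :: "nat \<Rightarrow> nat \<Rightarrow> nat \<Rightarrow> K" where
  "C0 n i j = (if i < n \<and> j < n then coeff (Lp n i) j else 0)"

lemma C0_B: "1 \<le> n \<Longrightarrow> i < n \<Longrightarrow> j < n \<Longrightarrow> (\<Sum>k<n. C0 n i k * Bmat n k j) = (if i = j then 1 else 0)"
proof -
  assume n: "1 \<le> n" and i: "i < n" and j: "j < n"
  have "(\<Sum>k<n. C0 n i k * Bmat n k j) = (\<Sum>k<n. coeff (Lp n i) k * lam n (int j) ^ k)"
    using i by (intro sum.cong) (auto simp: C0_def Bmat_lam)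
  also have "\<dots> = poly (Lp n i) (lam n (int j))" by (rule poly_sum_n[symmetric, OF degree_Lp[OF n i]])
  also have "\<dots> = (if i = j then 1 else 0)" by (rule poly_Lp_delta[OF n i j])
  finally show ?thesis .
qed

lemma B_C0: "1 \<le> n \<Longrightarrow> i < n \<Longrightarrow> j < n \<Longrightarrow> (\<Sum>k<n. Bmat n i k * C0 n k j) = (if i = j then 1 else 0)"
proof -
  assume n: "1 \<le> n" and i: "i < n" and j: "j < n"
  define Q where "Q = (\<Sum>k<n. smult (lam n (int k) ^ i) (Lp n k))"
  have "Q = monom 1 i"
  proof (rule poly_eqI_degree[of "(\<lambda>m. lam n (int m)) ` {..<n}"])
    fix x assume "x \<in> (\<lambda>m. lam n (int m)) ` {..<n}"
    then obtain m where m: "m < n" "x = lam n (int m)" by auto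
    have "poly Q x = (\<Sum>k<n. lam n (int k) ^ i * (if k = m then 1 else 0))"
      unfolding Q_def poly_sum using m n by (intro sum.cong) (auto simp: poly_Lp_delta)
    also have "\<dots> = x ^ i" using m by (simp add: if_distrib sum.delta cong: if_cong)
    finally show "poly Q x = poly (monom 1 i) x" by (simp add: poly_monom)
  next
    have inj: "inj_on (\<lambda>m. lam n (int m)) {..<n}"
      by (rule inj_onI) (use lam_inj n in auto)
    have c: "card ((\<lambda>m. lam n (int m)) ` {..<n}) = n" using card_image[OF inj] by simp
    have dl: "degree (smult a (Lp n p)) \<le> n - 1" if "p < n" for a p
      using degree_Lp[OF n that] degree_smult_le[of a "Lp n p"] by linarith
    have "degree Q \<le> n - 1" unfolding Q_def
      by (rule degree_sum_le) (simp, rule dl, simp)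
    then show "card ((\<lambda>m. lam n (int m)) ` {..<n}) > degree Q" using c n by linarith
    show "card ((\<lambda>m. lam n (int m)) ` {..<n}) > degree (monom (1::K) i)"
      using c degree_monom_le[of "1::K" i] i by linarith
  qed
  then have "coeff Q j = (if i = j then 1 else 0)" by simp
  moreover have "coeff Q j = (\<Sum>k<n. Bmat n i k * C0 n k j)"
    unfolding Q_def coeff_sum using j by (intro sum.cong) (auto simp: C0_def Bmat_lam)
  ultimately show ?thesis by simp
qed

lemma Cmat_eq: assumes "1 \<le> n" shows "Cmat n = C0 n"
  unfolding Cmat_def
proof (rule the_equality)
  show "(\<forall>i j. (i \<ge> n \<or> j \<ge> n) \<longrightarrow> C0 n i j = 0) \<and>
      (\<forall>i<n. \<forall>j<n. (\<Sum>k<n. C0 n i k * Bmat n k j) = (if i = j then 1 else 0)) \<and>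
      (\<forall>i<n. \<forall>j<n. (\<Sum>k<n. Bmat n i k * C0 n k j) = (if i = j then 1 else 0))"
    using C0_B[OF assms] B_C0[OF assms] by (auto simp: C0_def)
next
  fix C assume h: "(\<forall>i j. (i \<ge> n \<or> j \<ge> n) \<longrightarrow> C i j = 0) \<and>
      (\<forall>i<n. \<forall>j<n. (\<Sum>k<n. C i k * Bmat n k j) = (if i = j then 1 else 0)) \<and>
      (\<forall>i<n. \<forall>j<n. (\<Sum>k<n. Bmat n i k * C k j) = (if i = j then 1 else 0))"
  show "C = C0 n"
  proof (intro ext)
    fix i j
    show "C i j = C0 n i j"
    proof (cases "i < n \<and> j < n")
      case True
      have "C i j = (\<Sum>l<n. C i l * (if l = j then 1 else 0))"
        using True by (simp add: if_distrib sum.delta' cong: if_cong)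
      also have "\<dots> = (\<Sum>l<n. C i l * (\<Sum>k<n. Bmat n l k * C0 n k j))"
        using True B_C0[OF assms] by (intro sum.cong) auto
      also have "\<dots> = (\<Sum>k<n. (\<Sum>l<n. C i l * Bmat n l k) * C0 n k j)"
        by (simp add: sum_distrib_left sum_distrib_right mult.assoc) (rule sum.swap)
      also have "\<dots> = (\<Sum>k<n. (if i = k then 1 else 0) * C0 n k j)"
        using True h by (intro sum.cong) auto
      also have "\<dots> = (\<Sum>k<n. if k = i then C0 n k j else 0)" by (intro sum.cong) auto
      also have "\<dots> = C0 n i j" using True by (simp add: sum.delta')
      finally show ?thesis .
    next
      case False then show ?thesis using h by (auto simp: C0_def not_less)
    qed
  qed
qed

lemma final_eig:
  assumes n: "2 \<le> n" and w: "w \<in> words n" "w' \<in> words n"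
    and d: "ew w = (\<lambda>u. v1 u + v2 u)" "supv n v1" "supv n v2"
      "appv n (Phi_tau n) v1 = (\<lambda>u. lam n (int a) * v1 u)"
      "appv n (Phi_tau n) v2 = (\<lambda>u. lam n (int b) * v2 u)" "a < n" "b < n"
  shows "Phi_tau_pow n m w' w =
      (\<Sum>i<n. \<Sum>j<n. qq powi (int m * int n * (int n - 1 - 2 * int i)) * Cmat n i j
                         * Phi_tau_pow n j w' w)"
proof -
  have n1: "1 \<le> n" using n by simp
  have ptp: "Phi_tau_pow n j w' w = lam n (int a) ^ j * v1 w' + lam n (int b) ^ j * v2 w'" for j
  proof -
    have "appv n (mpow n (Phi_tau n) j) (ew w) w' = (\<Sum>u\<in>words n. if u = w then mpow n (Phi_tau n) j w' u else 0)"
      using w by (simp add: appv_def ew_def if_distrib cong: if_cong)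
    also have "\<dots> = Phi_tau_pow n j w' w" using w by (simp add: sum.delta' Phi_tau_pow_def)
    finally have "Phi_tau_pow n j w' w = appv n (mpow n (Phi_tau n) j) (ew w) w'" by simp
    also have "\<dots> = appv n (mpow n (Phi_tau n) j) v1 w' + appv n (mpow n (Phi_tau n) j) v2 w'"
      by (simp add: d(1) appv_add)
    also have "\<dots> = lam n (int a) ^ j * v1 w' + lam n (int b) ^ j * v2 w'"
      by (simp add: appv_mpow_eig[OF d(2) d(4)] appv_mpow_eig[OF d(3) d(5)])
    finally show ?thesis .
  qed
  have pw: "qq powi (int m * int n * (int n - 1 - 2 * int i)) = lam n (int i) ^ m" for i
    using Bmat_lam[of n m i] by (simp add: Bmat_def)
  have CB: "(\<Sum>j<n. Cmat n i j * lam n (int c) ^ j) = (if i = c then 1 else 0)" if "i < n" "c < n" for i c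
    using C0_B[OF n1 that] by (simp add: Cmat_eq[OF n1] Bmat_lam)
  have "(\<Sum>i<n. \<Sum>j<n. qq powi (int m * int n * (int n - 1 - 2 * int i)) * Cmat n i j * Phi_tau_pow n j w' w)
     = (\<Sum>i<n. lam n (int i) ^ m * ((\<Sum>j<n. Cmat n i j * lam n (int a) ^ j) * v1 w'
              + (\<Sum>j<n. Cmat n i j * lam n (int b) ^ j) * v2 w'))"
    by (intro sum.cong refl) (simp only: pw ptp, simp add: sum_distrib_left sum_distrib_right sum.distrib algebra_simps)
  also have "\<dots> = (\<Sum>i<n. (if i = a then lam n (int i) ^ m * v1 w' else 0) + (if i = b then lam n (int i) ^ m * v2 w' else 0))"
    using d(6,7) by (intro sum.cong refl) (simp add: CB distrib_left)
  also have "\<dots> = lam n (int a) ^ m * v1 w' + lam n (int b) ^ m * v2 w'"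
    using d(6,7) by (simp add: sum.distrib sum.delta')
  also have "\<dots> = Phi_tau_pow n m w' w" by (simp add: ptp)
  finally show ?thesis by simp
qed

theorem proposition4p5:
  fixes n m :: nat
  assumes "n \<ge> 2"
  shows "\<forall>w'\<in>words n. \<forall>w\<in>words n.
    Phi_tau_pow n m w' w =
      (\<Sum>i<n. \<Sum>j<n. qq powi (int m * int n * (int n - 1 - 2 * int i)) * Cmat n i j
                         * Phi_tau_pow n j w' w)"
proof (intro ballI)
  fix w' w assume w': "w' \<in> words n" and w: "w \<in> words n"
  have n1: "1 \<le> n" using assms by simp
  have len: "length w = n" using w by (simp add: words_def)
  define k where "k = length (filter id w)"
  have kle: "k \<le> n" using len length_filter_le[of id w] by (simp add: k_def)
  show "Phi_tau_pow n m w' w =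
      (\<Sum>i<n. \<Sum>j<n. qq powi (int m * int n * (int n - 1 - 2 * int i)) * Cmat n i j
                         * Phi_tau_pow n j w' w)"
  proof (cases "k = n")
    case True
    have allT: "w = replicate n True"
    proof (rule replicate_eqI)
      show "length w = n" by (rule len)
      fix x assume x: "x \<in> set w"
      show "x = True"
      proof (rule ccontr)
        assume "x \<noteq> True"
        then have "length (filter id w) < length w" using x by (intro length_filter_less) auto
        then show False using True len by (simp add: k_def)
      qed
    qed
    have ewc: "ew w = (\<lambda>u. if u = replicate n True then 1 else 0)" by (simp add: ew_def allT)
    have ev: "(Rc True True True True ^ (n-1)) ^ n = lam n (int (n-1))"
    proof -
      have ev2: "even ((n-1) * n)" by (cases "even n") auto
      have e: "int n * (int n - 1 - 2 * int (n-1)) = - int ((n-1) * n)" using n1 by (simp add: of_nat_diff algebra_simps)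
      have "lam n (int (n-1)) = inverse (qq ^ ((n-1) * n))"
        unfolding lam_def e by (simp only: power_int_minus power_int_of_nat)
      also have "\<dots> = (- inverse qq) ^ ((n-1) * n)" using ev2 by (simp add: power_inverse)
      finally show ?thesis by (simp add: Rc_def power_mult)
    qed
    have T: "appv n (Phi_tau n) (ew w) = (\<lambda>u. lam n (int (n-1)) * ew w u)"
      unfolding ewc using const_T[OF n1, of True] ev by simp
    show ?thesis
      by (rule final_eig[OF assms w w', of "ew w" "\<lambda>u. 0" "n-1" "n-1"])
         (use T n1 w supv_ew[OF w] in \<open>simp_all add: supv_def appv_zero\<close>)
  next
    case False
    then have kn: "k < n" using kle by simp
    obtain v1 v2 where G: "ew w = (\<lambda>u. v1 u + v2 u)" "supv n v1" "supv n v2"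
       "appv n (Phi_tau n) v1 = (\<lambda>u. lam n (int k) * v1 u)"
       "appv n (Phi_tau n) v2 = (\<lambda>u. lam n (int k - 1) * v2 u)"
       "crx n u0 v2 = (\<lambda>u. 0)" "k = 0 \<longrightarrow> v2 = (\<lambda>u. 0)"
      using good[OF assms, of k, rule_format, OF w k_def[symmetric]] by (elim exE conjE) (rule that)
    show ?thesis
    proof (cases "k = 0")
      case True
      then have v2: "v2 = (\<lambda>u. 0)" using G(7) by simp
      show ?thesis
      proof (rule final_eig[OF assms w w' G(1-4), where b = 0])
        show "appv n (Phi_tau n) v2 = (\<lambda>u. lam n (int 0) * v2 u)" unfolding v2 by (simp add: appv_zero)
      qed (use kn n1 in auto)
    next
      case False
      have e: "int k - 1 = int (k - 1)" using False by simp
      show ?thesis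
        by (rule final_eig[OF assms w w' G(1-4) G(5)[unfolded e] kn]) (use kn in arith)
    qed
  qed
qed

end
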